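(* Let $G=(V,E)$ be a connected locally finite graph with measure $\mu$ and edge weights $w$ as described in the context, and let $m\ge1$ be an integer. Suppose there are positive constants $\mu_0,\mu_1,w_0$ such that $\mu_0\le\mu(x)\le\mu_1$ for all $x\in V$ and $w_{xy}\ge w_0$ for all $xy\in E$. Then there exists a constant $C$ depending only on $\mu_0,\mu_1,w_0$ and $m$ such that for every $u\in W_0^{m,1}(V)$ and every integer $j\in[0,m/2]$, $$\|\Delta^ju\|_\infty\le C\int_V|\nabla\Delta^ju|\,d\mu.$$
   Context: $G=(V,E)$ is a connected graph with infinitely many vertices in which every vertex has finitely many neighbours; $y\sim x$ means $xy\in E$. A measure $\mu:V\to(0,+\infty)$ is given, and each edge $xy\in E$ carries a weight $w_{xy}>0$. For $u:V\to\mathbb{R}$ define $\Delta u(x)=\frac{1}{\mu(x)}\sum_{y\sim x}w_{xy}(u(y)-u(x))$ and $|\nabla u|(x)=\big(\frac{1}{2\mu(x)}\sum_{y\sim x}w_{xy}(u(y)-u(x))^2\big)^{1/2}$. Integrals are $\int_V f\,d\mu=\sum_{x\in V}\mu(x)f(x)$; $\|f\|_1=\int_V|f|d\mu$ and $\|f\|_\infty=\sup_{x\in V}|f(x)|$. Set $\Delta^0u=u$, $\Delta^ku=\Delta(\Delta^{k-1}u)$, $|\nabla\Delta^ku|=|\nabla(\Delta^ku)|$, and $|\nabla^j u|=|\Delta^k u|$ if $j=2k$, $|\nabla^ju|=|\nabla(\Delta^ku)|$ if $j=2k+1$. $W^{m,1}(V)$ is the space of $u$ with norm $\|u\|_{W^{m,1}(V)}=\sum_{j=0}^m\||\nabla^ju|\|_1<\infty$;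 $C_c(V)$ is the set of finitely supported functions on $V$, and $W_0^{m,1}(V)$ is the completion of $C_c(V)$ under $\|\cdot\|_{W^{m,1}(V)}$. *)

theory Defs
  imports "HOL-Analysis.Analysis" "HOL-Library.Extended_Nonnegative_Real"
begin

text \<open>Vertex set = UNIV of the type 'a. Edge relation E (y \<sim> x iff E x y),
  measure mu, edge weights w.\<close>

definition graph_lap ::
  "('a \<Rightarrow> real) \<Rightarrow> ('a \<Rightarrow> 'a \<Rightarrow> real) \<Rightarrow> ('a \<Rightarrow> 'a \<Rightarrow> bool) \<Rightarrow> ('a \<Rightarrow> real) \<Rightarrow> 'a \<Rightarrow> real" where
  "graph_lap mu w E u x = (1 / mu x) * (\<Sum>y\<in>{y. E x y}. w x y * (u y - u x))"

definition graph_grad ::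
  "('a \<Rightarrow> real) \<Rightarrow> ('a \<Rightarrow> 'a \<Rightarrow> real) \<Rightarrow> ('a \<Rightarrow> 'a \<Rightarrow> bool) \<Rightarrow> ('a \<Rightarrow> real) \<Rightarrow> 'a \<Rightarrow> real" where
  "graph_grad mu w E u x = sqrt (1 / (2 * mu x) * (\<Sum>y\<in>{y. E x y}. w x y * (u y - u x)\<^sup>2))"

definition graph_lap_pow ::
  "('a \<Rightarrow> real) \<Rightarrow> ('a \<Rightarrow> 'a \<Rightarrow> real) \<Rightarrow> ('a \<Rightarrow> 'a \<Rightarrow> bool) \<Rightarrow> nat \<Rightarrow> ('a \<Rightarrow> real) \<Rightarrow> 'a \<Rightarrow> real" where
  "graph_lap_pow mu w E k u = (graph_lap mu w E ^^ k) u"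

definition graph_nabla_j ::
  "('a \<Rightarrow> real) \<Rightarrow> ('a \<Rightarrow> 'a \<Rightarrow> real) \<Rightarrow> ('a \<Rightarrow> 'a \<Rightarrow> bool) \<Rightarrow> nat \<Rightarrow> ('a \<Rightarrow> real) \<Rightarrow> 'a \<Rightarrow> real" where
  "graph_nabla_j mu w E j u =
     (if even j then (\<lambda>x. \<bar>graph_lap_pow mu w E (j div 2) u x\<bar>)
      else graph_grad mu w E (graph_lap_pow mu w E (j div 2) u))"

definition l1_norm :: "('a \<Rightarrow> real) \<Rightarrow> ('a \<Rightarrow> real) \<Rightarrow> ennreal" where
  "l1_norm mu f = (\<Sum>\<^sub>\<infinity>x. ennreal (mu x * \<bar>f x\<bar>))"

definition sobolev_norm ::
  "('a \<Rightarrow> real) \<Rightarrow> ('a \<Rightarrow> 'a \<Rightarrow> real) \<Rightarrow> ('a \<Rightarrow> 'a \<Rightarrow> bool) \<Rightarrow> nat \<Rightarrow> ('a \<Rightarrow> real) \<Rightarrow> ennreal" where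
  "sobolev_norm mu w E m u = (\<Sum>j\<le>m. l1_norm mu (graph_nabla_j mu w E j u))"

text \<open>W_0^{m,1}(V): closure of finitely supported functions in the W^{m,1} norm
  (the completion identified with the corresponding space of functions on V).\<close>
definition W0 ::
  "('a \<Rightarrow> real) \<Rightarrow> ('a \<Rightarrow> 'a \<Rightarrow> real) \<Rightarrow> ('a \<Rightarrow> 'a \<Rightarrow> bool) \<Rightarrow> nat \<Rightarrow> ('a \<Rightarrow> real) set" where
  "W0 mu w E m = {u. \<exists>\<phi> :: nat \<Rightarrow> 'a \<Rightarrow> real.
       (\<forall>k. finite {x. \<phi> k x \<noteq> 0}) \<and>
       ((\<lambda>k. sobolev_norm mu w E m (\<lambda>x. \<phi> k x - u x)) \<longlongrightarrow> 0) sequentially}"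

end

theory Submission
  imports Defs
begin
lemma lap_diff:
  "graph_lap mu w E (\<lambda>x. f x - g x) = (\<lambda>x. graph_lap mu w E f x - graph_lap mu w E g x)"
proof (rule ext)
  fix x
  have "(\<Sum>y\<in>{y. E x y}. w x y * ((f y - g y) - (f x - g x)))
      = (\<Sum>y\<in>{y. E x y}. w x y * (f y - f x) - w x y * (g y - g x))"
    by (rule sum.cong) (auto simp: algebra_simps)
  also have "\<dots> = (\<Sum>y\<in>{y. E x y}. w x y * (f y - f x)) - (\<Sum>y\<in>{y. E x y}. w x y * (g y - g x))"
    by (rule sum_subtractf)
  finally show "graph_lap mu w E (\<lambda>x. f x - g x) x = graph_lap mu w E f x - graph_lap mu w E g x"
    unfolding graph_lap_def by (simp add: right_diff_distrib)
qed

lemma lap_pow_diff: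
  "graph_lap_pow mu w E k (\<lambda>x. f x - g x) = (\<lambda>x. graph_lap_pow mu w E k f x - graph_lap_pow mu w E k g x)"
  unfolding graph_lap_pow_def
  by (induction k) (simp_all add: lap_diff)

lemma lap_supp:
  assumes sym: "\<forall>x y. E x y \<longrightarrow> E y x" and lf: "\<forall>x. finite {y. E x y}"
    and fin: "finite {x. f x \<noteq> 0}"
  shows "finite {x. graph_lap mu w E f x \<noteq> 0}"
proof -
  let ?S = "{x. f x \<noteq> 0}"
  have "{x. graph_lap mu w E f x \<noteq> 0} \<subseteq> ?S \<union> (\<Union>y\<in>?S. {x. E y x})"
  proof
    fix x assume "x \<in> {x. graph_lap mu w E f x \<noteq> 0}"
    then have ne: "(\<Sum>y\<in>{y. E x y}. w x y * (f y - f x)) \<noteq> 0"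
      unfolding graph_lap_def by auto
    show "x \<in> ?S \<union> (\<Union>y\<in>?S. {x. E y x})"
    proof (rule ccontr)
      assume "x \<notin> ?S \<union> (\<Union>y\<in>?S. {x. E y x})"
      then have "f x = 0" and "\<forall>y. E x y \<longrightarrow> f y = 0" using sym by auto
      then have "(\<Sum>y\<in>{y. E x y}. w x y * (f y - f x)) = 0" by (intro sum.neutral) auto
      with ne show False by simp
    qed
  qed
  moreover have "finite (?S \<union> (\<Union>y\<in>?S. {x. E y x}))" using fin lf by auto
  ultimately show ?thesis by (rule finite_subset)
qed

lemma lap_pow_supp:
  assumes sym: "\<forall>x y. E x y \<longrightarrow> E y x" and lf: "\<forall>x. finite {y. E x y}"
    and fin: "finite {x. f x \<noteq> 0}"
  shows "finite {x. graph_lap_pow mu w E k f x \<noteq> 0}"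
  unfolding graph_lap_pow_def
proof (induction k)
  case 0 then show ?case using fin by simp
next
  case (Suc k) then show ?case using lap_supp[OF sym lf] by simp
qed

lemma edge_bound:
  assumes "E p q" and lf: "finite {y. E p y}" and wpos: "\<forall>y. E p y \<longrightarrow> w p y \<ge> w0"
    and "w0 > 0" and "mu p > 0" and "mu p \<le> \<mu>1"
  shows "\<bar>f q - f p\<bar> \<le> sqrt (2 * \<mu>1 / w0) * graph_grad mu w E f p"
proof -
  let ?s = "\<Sum>y\<in>{y. E p y}. w p y * (f y - f p)\<^sup>2"
  have h1: "w p q * (f q - f p)\<^sup>2 \<le> ?s"
  proof (rule member_le_sum)
    fix y assume "y \<in> {y. E p y} - {q}"
    then have "w p y \<ge> 0" using wpos \<open>w0>0\<close> by force
    then show "0 \<le> w p y * (f y - f p)\<^sup>2" by simp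
  qed (use assms in auto)
  have h2: "w0 * (f q - f p)\<^sup>2 \<le> w p q * (f q - f p)\<^sup>2"
    using wpos assms(1) by (intro mult_right_mono) auto
  from h1 h2 have 1: "(f q - f p)\<^sup>2 \<le> ?s / w0" using \<open>w0>0\<close> by (simp add: field_simps)
  have s0: "?s \<ge> 0" using h1 h2 \<open>w0>0\<close> by (smt (verit) mult_nonneg_nonneg zero_le_power2)
  have "?s / w0 = (2 * mu p / w0) * (1 / (2 * mu p) * ?s)" using assms by (simp add: field_simps)
  also have "\<dots> \<le> (2 * \<mu>1 / w0) * (1 / (2 * mu p) * ?s)"
    using assms s0 by (intro mult_right_mono divide_right_mono) auto
  finally have "(f q - f p)\<^sup>2 \<le> (2 * \<mu>1 / w0) * (1 / (2 * mu p) * ?s)" using 1 by linarith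
  then have "sqrt ((f q - f p)\<^sup>2) \<le> sqrt ((2 * \<mu>1 / w0) * (1 / (2 * mu p) * ?s))"
    by (rule real_sqrt_le_mono)
  then show ?thesis unfolding graph_grad_def real_sqrt_mult[symmetric] by simp
qed

lemma path_bound:
  fixes f D :: "'a \<Rightarrow> real"
  assumes estep: "\<And>p q. E p q \<Longrightarrow> \<bar>f q - f p\<bar> \<le> D p"
  shows "(E ^^ n) a b \<Longrightarrow> (\<forall>k<n. \<not> (E ^^ k) a b) \<Longrightarrow>
    \<exists>F. finite F \<and> F \<subseteq> {y. \<exists>k<n. (E ^^ k) a y} \<and> \<bar>f a - f b\<bar> \<le> sum D F"
proof (induction n arbitrary: b)
  case 0
  then have "a = b" by simp
  then show ?case by (intro exI[of _ "{}"]) simp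
next
  case (Suc n)
  from Suc.prems(1) obtain b' where b': "(E ^^ n) a b'" "E b' b" by (rule relpowp_Suc_E)
  have nb': "\<forall>k<n. \<not> (E ^^ k) a b'"
  proof (intro allI impI notI)
    fix k assume "k < n" and kb: "(E ^^ k) a b'"
    have "(E ^^ Suc k) a b" by (rule relpowp_Suc_I[OF kb b'(2)])
    moreover have "Suc k < Suc n" using \<open>k < n\<close> by simp
    ultimately show False using Suc.prems(2) by blast
  qed
  from Suc.IH[OF b'(1) nb'] obtain F where F: "finite F" "F \<subseteq> {y. \<exists>k<n. (E ^^ k) a y}"
    "\<bar>f a - f b'\<bar> \<le> sum D F" by blast
  have "b' \<notin> F"
  proof
    assume "b' \<in> F"
    then have "\<exists>k<n. (E ^^ k) a b'" using F(2) by (simp add: subset_iff)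
    then show False using nb' by blast
  qed
  then have "sum D (insert b' F) = D b' + sum D F" using F(1) by simp
  moreover have "\<bar>f b - f b'\<bar> \<le> D b'" using estep[OF b'(2)] .
  ultimately have "\<bar>f a - f b\<bar> \<le> sum D (insert b' F)" using F(3) by linarith
  moreover have "insert b' F \<subseteq> {y. \<exists>k<Suc n. (E ^^ k) a y}" 
  proof -
    have "\<exists>k<Suc n. (E ^^ k) a y" if "y \<in> F" for y
    proof -
      from that F(2) obtain k where "k < n" "(E ^^ k) a y" by (auto simp: subset_iff)
      then show ?thesis by (intro exI[of _ k]) simp
    qed
    moreover have "\<exists>k<Suc n. (E ^^ k) a b'" using b'(1) by (intro exI[of _ n]) simp
    ultimately show ?thesis by auto
  qed
  ultimately show ?case using F(1) by (intro exI[of _ "insert b' F"]) simp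
qed

lemma reach_bound:
  fixes f D :: "'a \<Rightarrow> real"
  assumes estep: "\<And>p q. E p q \<Longrightarrow> \<bar>f q - f p\<bar> \<le> D p" and "E\<^sup>*\<^sup>* a b"
  shows "\<exists>F. finite F \<and> \<bar>f a - f b\<bar> \<le> sum D F"
proof -
  have "\<exists>n. (E ^^ n) a b" using assms(2) by (rule rtranclp_imp_relpowp)
  from exists_least_iff[THEN iffD1, OF this]
  obtain n where n1: "(E ^^ n) a b" and n2: "\<forall>k<n. \<not> (E ^^ k) a b" by blast
  have "\<exists>F. finite F \<and> F \<subseteq> {y. \<exists>k<n. (E ^^ k) a y} \<and> \<bar>f a - f b\<bar> \<le> sum D F"
    by (rule path_bound[of E f D n a b]) (fact estep, fact n1, fact n2)
  then show ?thesis by (elim exE conjE) (intro exI conjI)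
qed

lemma sum_le_infsum_ennreal:
  fixes g :: "'a \<Rightarrow> ennreal"
  assumes "finite F"
  shows "sum g F \<le> (\<Sum>\<^sub>\<infinity>x. g x)"
proof -
  have "infsum g F \<le> infsum g UNIV"
    by (rule infsum_mono_neutral) (simp_all add: nonneg_summable_on_complete)
  then show ?thesis using assms by simp
qed

lemma grad_nonneg: "mu x > 0 \<Longrightarrow> (\<forall>y. E x y \<longrightarrow> w x y \<ge> 0) \<Longrightarrow> graph_grad mu w E f x \<ge> 0"
  unfolding graph_grad_def
  by (intro real_sqrt_ge_zero mult_nonneg_nonneg sum_nonneg) auto

lemma small_value:
  fixes u :: "'a \<Rightarrow> real"
  assumes inf: "infinite (UNIV :: 'a set)" and sym: "\<forall>x y. E x y \<longrightarrow> E y x"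
    and lf: "\<forall>x. finite {y. E x y}" and mu0: "\<mu>0 > 0" and mub: "\<forall>x. \<mu>0 \<le> mu x"
    and u: "u \<in> W0 mu w E m" and j: "2 * j \<le> m" and e: "e > 0"
  shows "\<exists>z. \<bar>graph_lap_pow mu w E j u z\<bar> < e"
proof (rule ccontr)
  assume "\<not> ?thesis"
  then have big: "\<And>z. \<bar>graph_lap_pow mu w E j u z\<bar> \<ge> e" by (simp add: not_less)
  let ?v = "graph_lap_pow mu w E j u"
  from u obtain \<phi> :: "nat \<Rightarrow> 'a \<Rightarrow> real" where fin: "\<forall>k. finite {x. \<phi> k x \<noteq> 0}"
    and lim: "((\<lambda>k. sobolev_norm mu w E m (\<lambda>x. \<phi> k x - u x)) \<longlongrightarrow> 0) sequentially"
    unfolding W0_def by blast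
  have "eventually (\<lambda>k. sobolev_norm mu w E m (\<lambda>x. \<phi> k x - u x) < 1) sequentially"
    using order_tendstoD(2)[OF lim] by simp
  then obtain k where k: "sobolev_norm mu w E m (\<lambda>x. \<phi> k x - u x) < 1"
    by (meson eventually_sequentially order_refl)
  let ?\<psi> = "graph_lap_pow mu w E j (\<phi> k)"
  have "l1_norm mu (graph_nabla_j mu w E (2*j) (\<lambda>x. \<phi> k x - u x))
      \<le> sobolev_norm mu w E m (\<lambda>x. \<phi> k x - u x)"
    unfolding sobolev_norm_def by (rule member_le_sum) (use j in auto)
  moreover have "graph_nabla_j mu w E (2*j) (\<lambda>x. \<phi> k x - u x) = (\<lambda>x. \<bar>?\<psi> x - ?v x\<bar>)"
    unfolding graph_nabla_j_def by (simp add: lap_pow_diff)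
  ultimately have L: "l1_norm mu (\<lambda>x. \<bar>?\<psi> x - ?v x\<bar>) < 1" using k by simp
  have S: "finite {x. ?\<psi> x \<noteq> 0}" using lap_pow_supp[OF sym lf] fin by blast
  have infS: "infinite (- {x. ?\<psi> x \<noteq> 0})"
    using inf S by (metis Compl_partition2 finite_UnI)
  let ?g = "\<lambda>x. ennreal (mu x * \<bar>\<bar>?\<psi> x - ?v x\<bar>\<bar>)"
  have "(?g has_sum \<infinity>) (- {x. ?\<psi> x \<noteq> 0})"
  proof (rule has_sum_superconst_infinite_ennreal[where b = "ennreal (\<mu>0 * e)"])
    fix x assume "x \<in> - {x. ?\<psi> x \<noteq> 0}"
    then have "\<bar>\<bar>?\<psi> x - ?v x\<bar>\<bar> = \<bar>?v x\<bar>" by simp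
    moreover have "\<mu>0 * e \<le> mu x * \<bar>?v x\<bar>"
    proof -
      have "\<mu>0 \<le> mu x" using mub by blast
      then show ?thesis using big[of x] mu0 e by (intro mult_mono) auto
    qed
    ultimately show "?g x \<ge> ennreal (\<mu>0 * e)" by (simp add: ennreal_leI)
  qed (use mu0 e infS in auto)
  then have "infsum ?g (- {x. ?\<psi> x \<noteq> 0}) = \<infinity>" by (simp add: infsumI)
  moreover have "infsum ?g (- {x. ?\<psi> x \<noteq> 0}) \<le> infsum ?g UNIV"
    by (rule infsum_mono_neutral) (simp_all add: nonneg_summable_on_complete)
  ultimately have "infsum ?g UNIV = \<infinity>" by (simp add: top_unique)
  with L show False unfolding l1_norm_def by simp
qed

theorem theorem1p6:
  fixes \<mu>0 \<mu>1 w0 :: real and m :: nat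
  assumes "\<mu>0 > 0" and "\<mu>1 > 0" and "w0 > 0" and "m \<ge> 1"
  shows "\<exists>C::real. \<forall>(E :: 'a \<Rightarrow> 'a \<Rightarrow> bool) (mu :: 'a \<Rightarrow> real) (w :: 'a \<Rightarrow> 'a \<Rightarrow> real).
    infinite (UNIV :: 'a set) \<longrightarrow>
    (\<forall>x y. E x y \<longrightarrow> E y x) \<longrightarrow>
    (\<forall>x. finite {y. E x y}) \<longrightarrow>
    (\<forall>x y. E\<^sup>*\<^sup>* x y) \<longrightarrow>
    (\<forall>x y. w x y = w y x) \<longrightarrow>
    (\<forall>x y. E x y \<longrightarrow> w x y \<ge> w0) \<longrightarrow>
    (\<forall>x. \<mu>0 \<le> mu x \<and> mu x \<le> \<mu>1) \<longrightarrow>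
    (\<forall>u \<in> W0 mu w E m. \<forall>j::nat. 2 * j \<le> m \<longrightarrow>
       (\<forall>x. ennreal \<bar>graph_lap_pow mu w E j u x\<bar>
              \<le> ennreal C * l1_norm mu (graph_grad mu w E (graph_lap_pow mu w E j u))))"
proof (intro exI allI impI ballI)
  define C where "C = sqrt (2 * \<mu>1 / w0) / \<mu>0"
  have C0: "C \<ge> 0" unfolding C_def using assms by simp
  fix E :: "'a \<Rightarrow> 'a \<Rightarrow> bool" and mu :: "'a \<Rightarrow> real" and w :: "'a \<Rightarrow> 'a \<Rightarrow> real"
    and u j x
  assume inf: "infinite (UNIV :: 'a set)" and sym: "\<forall>x y. E x y \<longrightarrow> E y x"
    and lf: "\<forall>x. finite {y. E x y}" and conn: "\<forall>x y. E\<^sup>*\<^sup>* x y"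
    and wsym: "\<forall>x y. w x y = w y x" and wb: "\<forall>x y. E x y \<longrightarrow> w x y \<ge> w0"
    and mub: "\<forall>x. \<mu>0 \<le> mu x \<and> mu x \<le> \<mu>1" and u: "u \<in> W0 mu w E m" and j: "2 * j \<le> m"
  let ?v = "graph_lap_pow mu w E j u"
  let ?gr = "graph_grad mu w E ?v"
  let ?G = "l1_norm mu ?gr"
  have mupos: "\<And>p. mu p > 0" using mub assms(1) by (meson less_le_trans)
  have grnn: "\<And>p. ?gr p \<ge> 0"
    by (rule grad_nonneg) (use mupos wb assms(3) in \<open>auto intro: order.trans[OF less_imp_le]\<close>)
  define D where "D p = C * (mu p * ?gr p)" for p
  have estep: "\<bar>?v q - ?v p\<bar> \<le> D p" if "E p q" for p q
  proof -
    have "\<bar>?v q - ?v p\<bar> \<le> sqrt (2 * \<mu>1 / w0) * ?gr p"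
      by (rule edge_bound) (use that lf wb assms mupos mub in auto)
    also have "\<dots> \<le> sqrt (2 * \<mu>1 / w0) * (mu p * ?gr p / \<mu>0)"
    proof (rule mult_left_mono)
      have "\<mu>0 * ?gr p \<le> mu p * ?gr p" using mub grnn by (intro mult_right_mono) auto
      then show "?gr p \<le> mu p * ?gr p / \<mu>0" using assms(1) by (simp add: field_simps)
    qed (use assms in simp)
    also have "\<dots> = D p" unfolding D_def C_def by simp
    finally show ?thesis .
  qed
  have A: "ennreal \<bar>?v x\<bar> \<le> ennreal \<bar>?v z\<bar> + ennreal C * ?G" for z
  proof -
    obtain F where F: "finite F" "\<bar>?v x - ?v z\<bar> \<le> sum D F"
      using reach_bound[of E ?v D x z] estep conn by blast
    have S0: "0 \<le> (\<Sum>p\<in>F. mu p * ?gr p)" using mupos grnn by (intro sum_nonneg) (simp add: less_imp_le)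
    have "\<bar>?v x\<bar> \<le> \<bar>?v z\<bar> + C * (\<Sum>p\<in>F. mu p * ?gr p)"
      using F(2) unfolding D_def sum_distrib_left[symmetric] by linarith
    then have "ennreal \<bar>?v x\<bar> \<le> ennreal (\<bar>?v z\<bar> + C * (\<Sum>p\<in>F. mu p * ?gr p))"
      by (rule ennreal_leI)
    also have "\<dots> = ennreal \<bar>?v z\<bar> + ennreal C * ennreal (\<Sum>p\<in>F. mu p * ?gr p)"
      using C0 S0 by (simp add: ennreal_mult)
    also have "ennreal (\<Sum>p\<in>F. mu p * ?gr p) = (\<Sum>p\<in>F. ennreal (mu p * \<bar>?gr p\<bar>))"
      using mupos grnn by (subst sum_ennreal) (auto simp: less_imp_le)
    also have "\<dots> \<le> ?G" unfolding l1_norm_def by (rule sum_le_infsum_ennreal[OF F(1)])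
    finally show ?thesis by (simp add: mult_left_mono add_left_mono)
  qed
  show "ennreal \<bar>?v x\<bar> \<le> ennreal C * ?G"
  proof (rule ennreal_le_epsilon)
    fix e :: real assume "0 < e"
    then obtain z where z: "\<bar>?v z\<bar> < e"
      using small_value[OF inf sym lf assms(1) _ u j] mub by blast
    have "ennreal \<bar>?v x\<bar> \<le> ennreal \<bar>?v z\<bar> + ennreal C * ?G" by (rule A)
    also have "\<dots> \<le> ennreal e + ennreal C * ?G"
      using z by (intro add_right_mono ennreal_leI) simp
    finally show "ennreal \<bar>?v x\<bar> \<le> ennreal C * ?G + ennreal e" by (simp add: add.commute)
  qed
qed

end
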